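(* Let $\mu$ be the uniform probability measure on $\{-1,1\}^n$. There exists a universal constant $\kappa>0$ such that for every continuously differentiable $f:\mathbb{R}^n\to\mathbb{R}$, $$\log\int e^f\,d\mu\le\sup_{y\in[-1,1]^n}\{f(y)-I(y)\}+\kappa\, b(V),$$ where $V=\nabla f([-1,1]^n)$.
   Context: $I(x)=\sum_{i=1}^n\big(\frac{1+x_i}{2}\log(1+x_i)+\frac{1-x_i}{2}\log(1-x_i)\big)$ for $x\in[-1,1]^n$ and $+\infty$ otherwise (equivalently $I(y)=H(\mu_y|\mu)$ where $\mu_y$ is the product measure on $\{-1,1\}^n$ with mean $y$). $b(V)=\mathbb{E}\sup_{\xi\in V}\langle\xi,\varepsilon\rangle$ with $\varepsilon$ uniform on $\{-1,1\}^n$. *)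

theory Defs
  imports "HOL-Analysis.Analysis" "HOL-Probability.Probability"
begin

text \<open>Points of R^n are encoded as functions nat => real vanishing at indices >= n.\<close>

definition Rn :: "nat \<Rightarrow> (nat \<Rightarrow> real) set" where
  "Rn n = {x. \<forall>i\<ge>n. x i = 0}"

definition cube :: "nat \<Rightarrow> (nat \<Rightarrow> real) set" where
  "cube n = {x \<in> Rn n. \<forall>i<n. \<bar>x i\<bar> \<le> 1}"

definition signs :: "nat \<Rightarrow> (nat \<Rightarrow> real) set" where
  "signs n = {x \<in> Rn n. \<forall>i<n. x i = 1 \<or> x i = -1}"

definition ip :: "nat \<Rightarrow> (nat \<Rightarrow> real) \<Rightarrow> (nat \<Rightarrow> real) \<Rightarrow> real" where
  "ip n x y = (\<Sum>i<n. x i * y i)"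

definition enorm :: "nat \<Rightarrow> (nat \<Rightarrow> real) \<Rightarrow> real" where
  "enorm n x = sqrt (\<Sum>i<n. (x i)\<^sup>2)"

definition has_grad :: "nat \<Rightarrow> ((nat \<Rightarrow> real) \<Rightarrow> real) \<Rightarrow> (nat \<Rightarrow> real) \<Rightarrow> (nat \<Rightarrow> real) \<Rightarrow> bool" where
  "has_grad n f g x \<longleftrightarrow> g \<in> Rn n \<and>
     (\<forall>e>0. \<exists>d>0. \<forall>h\<in>Rn n. enorm n h < d \<longrightarrow>
        \<bar>f (\<lambda>i. x i + h i) - f x - ip n g h\<bar> \<le> e * enorm n h)"

definition C1_grad :: "nat \<Rightarrow> ((nat \<Rightarrow> real) \<Rightarrow> real) \<Rightarrow> ((nat \<Rightarrow> real) \<Rightarrow> (nat \<Rightarrow> real)) \<Rightarrow> bool" where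
  "C1_grad n f g \<longleftrightarrow> (\<forall>x\<in>Rn n. has_grad n f (g x) x) \<and>
     (\<forall>x\<in>Rn n. \<forall>e>0. \<exists>d>0. \<forall>y\<in>Rn n. enorm n (\<lambda>i. y i - x i) < d \<longrightarrow> enorm n (\<lambda>i. g y i - g x i) < e)"

definition xlnx :: "real \<Rightarrow> real" where
  "xlnx t = (if t = 0 then 0 else t * ln t)"

definition Ient :: "nat \<Rightarrow> (nat \<Rightarrow> real) \<Rightarrow> real" where
  "Ient n y = (\<Sum>i<n. xlnx (1 + y i) / 2 + xlnx (1 - y i) / 2)"

definition mu :: "nat \<Rightarrow> (nat \<Rightarrow> real) pmf" where
  "mu n = pmf_of_set (signs n)"

definition bV :: "nat \<Rightarrow> (nat \<Rightarrow> real) set \<Rightarrow> real" where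
  "bV n V = measure_pmf.expectation (mu n) (\<lambda>e. Sup ((\<lambda>\<xi>. ip n \<xi> e) ` V))"

end

theory Submission
  imports Defs
begin

lemma signs_0: "signs 0 = {(\<lambda>_. 0)}"
  by (auto simp: signs_def Rn_def)

lemma signs_Suc: "signs (Suc n) = (\<lambda>x. x(n:=1)) ` signs n \<union> (\<lambda>x. x(n:=-1)) ` signs n"
proof (intro equalityI subsetI)
  fix x assume x: "x \<in> signs (Suc n)"
  then have xn: "x n = 1 \<or> x n = -1" by (auto simp: signs_def)
  have x0: "x(n:=0) \<in> signs n" using x by (auto simp: signs_def Rn_def)
  show "x \<in> (\<lambda>x. x(n:=1)) ` signs n \<union> (\<lambda>x. x(n:=-1)) ` signs n"
  proof (cases "x n = 1")
    case True
    then have "x = (x(n:=0))(n:=1)" by auto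
    then show ?thesis using x0 by blast
  next
    case False
    then have "x = (x(n:=0))(n:=-1)" using xn by auto
    then show ?thesis using x0 by blast
  qed
next
  fix x assume "x \<in> (\<lambda>x. x(n:=1)) ` signs n \<union> (\<lambda>x. x(n:=-1)) ` signs n"
  then show "x \<in> signs (Suc n)"
    by (auto simp: signs_def Rn_def less_Suc_eq)
qed

lemma inj_upd_signs: "inj_on (\<lambda>x. x(n:=s)) (signs n)"
proof (rule inj_onI)
  fix x y assume "x \<in> signs n" "y \<in> signs n" "x(n:=s) = y(n:=s)"
  then have xn: "x n = 0" and yn: "y n = 0" and e: "x(n:=s) = y(n:=s)" by (auto simp: signs_def Rn_def)
  show "x = y"
  proof
    fix i show "x i = y i"
    proof (cases "i = n")
      case True then show ?thesis using xn yn by simp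
    next
      case False then show ?thesis using fun_cong[OF e, of i] by simp
    qed
  qed
qed

lemma finite_signs: "finite (signs n)"
  by (induction n) (auto simp: signs_0 signs_Suc)

lemma sum_signs_Suc:
  "(\<Sum>x\<in>signs (Suc n). G x) = (\<Sum>x\<in>signs n. G (x(n:=1)) + G (x(n:=-1)))"
proof -
  have disj: "(\<lambda>x. x(n:=1)) ` signs n \<inter> (\<lambda>x. x(n:=-1)) ` signs n = {}"
    by (auto simp: fun_eq_iff) (metis fun_upd_same one_neq_neg_one)
  have "(\<Sum>x\<in>signs (Suc n). G x) = (\<Sum>x\<in>(\<lambda>x. x(n:=1)) ` signs n. G x) + (\<Sum>x\<in>(\<lambda>x. x(n:=-1)) ` signs n. G x)"
    unfolding signs_Suc by (rule sum.union_disjoint) (auto simp: finite_signs disj)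
  also have "\<dots> = (\<Sum>x\<in>signs n. G (x(n:=1))) + (\<Sum>x\<in>signs n. G (x(n:=-1)))"
    by (simp add: sum.reindex inj_upd_signs)
  finally show ?thesis by (simp add: sum.distrib)
qed

lemma card_signs: "card (signs n) = 2^n"
proof (induction n)
  case 0 then show ?case by (simp add: signs_0)
next
  case (Suc n)
  have "card (signs (Suc n)) = (\<Sum>x\<in>signs (Suc n). 1::nat)" by simp
  also have "\<dots> = (\<Sum>x\<in>signs n. 2)" by (subst sum_signs_Suc) simp
  also have "\<dots> = 2 * 2^n" using Suc by simp
  finally show ?case by simp
qed

definition Em :: "nat \<Rightarrow> ((nat \<Rightarrow> real) \<Rightarrow> real) \<Rightarrow> real" where
  "Em n G = (\<Sum>x\<in>signs n. G x) / 2^n"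

definition Wexp :: "nat \<Rightarrow> ((nat \<Rightarrow> real) \<Rightarrow> real) \<Rightarrow> real" where
  "Wexp n P = (\<Sum>e\<in>signs n. \<Sum>e'\<in>signs n. P (\<lambda>i. e i + e' i)) / 4^n"

definition cvx :: "((nat \<Rightarrow> real) \<Rightarrow> real) \<Rightarrow> bool" where
  "cvx P \<longleftrightarrow> (\<forall>u v t. 0 \<le> t \<longrightarrow> t \<le> 1 \<longrightarrow> P (\<lambda>i. (1-t) * u i + t * v i) \<le> (1-t) * P u + t * P v)"

lemma upd_add: "(\<lambda>i. (e(n:=a)) i + (e'(n:=b)) i) = (\<lambda>i. e i + e' i)(n := a + b)"
  by (auto simp: fun_eq_iff)

lemma Wexp_Suc:
  "Wexp (Suc n) P = (Wexp n (\<lambda>u. P (u(n:=2))) + 2 * Wexp n (\<lambda>u. P (u(n:=0))) + Wexp n (\<lambda>u. P (u(n:=-2)))) / 4"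
proof -
  have "(\<Sum>e\<in>signs (Suc n). \<Sum>e'\<in>signs (Suc n). P (\<lambda>i. e i + e' i))
      = (\<Sum>e\<in>signs n. \<Sum>e'\<in>signs n. P ((\<lambda>i. e i + e' i)(n:=2)) + P ((\<lambda>i. e i + e' i)(n:=0))
            + (P ((\<lambda>i. e i + e' i)(n:=0)) + P ((\<lambda>i. e i + e' i)(n:=-2))))"
    by (simp only: sum_signs_Suc upd_add sum.distrib) (simp add: algebra_simps)
  also have "\<dots> = (\<Sum>e\<in>signs n. \<Sum>e'\<in>signs n. P ((\<lambda>i. e i + e' i)(n:=2)))
      + 2 * (\<Sum>e\<in>signs n. \<Sum>e'\<in>signs n. P ((\<lambda>i. e i + e' i)(n:=0)))
      + (\<Sum>e\<in>signs n. \<Sum>e'\<in>signs n. P ((\<lambda>i. e i + e' i)(n:=-2)))"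
    by (simp add: sum.distrib sum_distrib_left algebra_simps)
  finally show ?thesis
    unfolding Wexp_def by (simp add: field_simps)
qed

lemma Wexp_mono: "(\<And>u. P u \<le> Q u) \<Longrightarrow> Wexp n P \<le> Wexp n Q"
  unfolding Wexp_def by (intro divide_right_mono sum_mono) auto

lemma Wexp_lin: "Wexp n (\<lambda>u. a * P u + b * Q u) = a * Wexp n P + b * Wexp n Q"
  unfolding Wexp_def by (simp add: sum.distrib sum_distrib_left add_divide_distrib mult.assoc)

lemma oneD:
  fixes \<psi> :: "real \<Rightarrow> real"
  assumes cv: "\<And>a b t. 0 \<le> t \<Longrightarrow> t \<le> 1 \<Longrightarrow> \<psi> ((1-t)*a + t*b) \<le> (1-t) * \<psi> a + t * \<psi> b"
    and m: "-1 \<le> m" "m \<le> 1"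
  shows "(1+m)/2 * \<psi> (1-m) + (1-m)/2 * \<psi> (-1-m) \<le> (\<psi> 2 + 2 * \<psi> 0 + \<psi> (-2)) / 4"
proof -
  have e1: "(1 - (1-m)/2)*0 + (1-m)/2*2 = 1-m" by simp
  have e2: "(1 - (1+m)/2)*0 + (1+m)/2*(-2) = -1-m" by (simp add: field_simps)
  have h1: "\<psi> (1-m) \<le> (1 - (1-m)/2) * \<psi> 0 + (1-m)/2 * \<psi> 2"
    using cv[of "(1-m)/2" 0 2] m unfolding e1 by simp
  have h2: "\<psi> (-1-m) \<le> (1 - (1+m)/2) * \<psi> 0 + (1+m)/2 * \<psi> (-2)"
    using cv[of "(1+m)/2" 0 "-2"] m unfolding e2 by simp
  have h3: "\<psi> 0 \<le> (1 - 1/2) * \<psi> 2 + 1/2 * \<psi> (-2)"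
    using cv[of "1/2" 2 "-2"] by simp
  define \<alpha> where "\<alpha> = (1+m)/2"
  define \<beta> where "\<beta> = (1-m)/2"
  have ab: "\<alpha> \<ge> 0" "\<beta> \<ge> 0" "\<alpha> + \<beta> = 1" using m by (auto simp: \<alpha>_def \<beta>_def field_simps)
  have h1': "\<psi> (1-m) \<le> \<alpha> * \<psi> 0 + \<beta> * \<psi> 2" using h1 by (simp add: \<alpha>_def \<beta>_def field_simps)
  have h2': "\<psi> (-1-m) \<le> \<beta> * \<psi> 0 + \<alpha> * \<psi> (-2)" using h2 by (simp add: \<alpha>_def \<beta>_def field_simps)
  have "(1+m)/2 * \<psi> (1-m) + (1-m)/2 * \<psi> (-1-m) = \<alpha> * \<psi> (1-m) + \<beta> * \<psi> (-1-m)"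
    by (simp add: \<alpha>_def \<beta>_def)
  also have "\<dots> \<le> \<alpha> * (\<alpha> * \<psi> 0 + \<beta> * \<psi> 2) + \<beta> * (\<beta> * \<psi> 0 + \<alpha> * \<psi> (-2))"
    using h1' h2' ab by (intro add_mono mult_left_mono) auto
  also have "\<dots> = (\<alpha>*\<alpha> + \<beta>*\<beta>) * \<psi> 0 + (\<alpha>*\<beta>) * (\<psi> 2 + \<psi> (-2))"
    by (simp add: algebra_simps)
  also have "\<dots> \<le> (\<psi> 2 + 2 * \<psi> 0 + \<psi> (-2)) / 4"
  proof -
    have q0: "(\<alpha>+\<beta>)*(\<alpha>+\<beta>) = \<alpha>*\<alpha> + \<beta>*\<beta> + 2*(\<alpha>*\<beta>)" by (simp add: algebra_simps)
    have q: "\<alpha>*\<alpha> + \<beta>*\<beta> = 1 - 2*(\<alpha>*\<beta>)" using q0 ab(3) by simp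
    have q2: "\<alpha>*\<beta> \<le> 1/4"
    proof -
      have "0 \<le> (\<alpha> - \<beta>)^2" by simp
      then have "0 \<le> (\<alpha>+\<beta>)^2 - 4*(\<alpha>*\<beta>)" by (simp add: power2_eq_square algebra_simps)
      then show ?thesis using ab(3) by simp
    qed
    have c: "0 \<le> (1/4 - \<alpha>*\<beta>) * (\<psi> 2 + \<psi> (-2) - 2 * \<psi> 0)" using h3 q2 by (intro mult_nonneg_nonneg) auto
    show ?thesis unfolding q using c by (simp add: algebra_simps)
  qed
  finally show ?thesis .
qed

lemma Em_Suc: "Em (Suc n) G = (Em n (\<lambda>x. G (x(n:=1))) + Em n (\<lambda>x. G (x(n:=-1)))) / 2"
  unfolding Em_def by (simp add: sum_signs_Suc sum.distrib field_simps)

lemma signs_ne: "signs n \<noteq> {}"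
  using card_signs[of n] by auto

lemma Em_pos: "(\<And>x. G x > 0) \<Longrightarrow> Em n G > 0"
  unfolding Em_def using finite_signs signs_ne by (intro divide_pos_pos sum_pos) auto

lemma gibbs_id:
  fixes A B :: real
  assumes A: "A > 0" and B: "B > 0"
  shows "ln ((A+B)/2) = A/(A+B) * ln A + (1 - A/(A+B)) * ln B
           - (xlnx (1 + (2*(A/(A+B)) - 1)) / 2 + xlnx (1 - (2*(A/(A+B)) - 1)) / 2)"
proof -
  have e1: "1 + (2*(A/(A+B)) - 1) = 2*A/(A+B)" by simp
  have e2: "1 - (2*(A/(A+B)) - 1) = 2*B/(A+B)" using A B by (simp add: field_simps)
  have l1: "ln (2*A/(A+B)) = ln 2 + ln A - ln (A+B)" using A B by (simp add: ln_div ln_mult)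
  have l2: "ln (2*B/(A+B)) = ln 2 + ln B - ln (A+B)" using A B by (simp add: ln_div ln_mult)
  have x1: "xlnx (2*A/(A+B)) / 2 = A/(A+B) * (ln 2 + ln A - ln (A+B))"
  proof -
    have "xlnx (2*A/(A+B)) / 2 = A/(A+B) * ln (2*A/(A+B))" using A B by (simp add: xlnx_def field_simps)
    then show ?thesis by (simp only: l1)
  qed
  have x2: "xlnx (2*B/(A+B)) / 2 = B/(A+B) * (ln 2 + ln B - ln (A+B))"
  proof -
    have "xlnx (2*B/(A+B)) / 2 = B/(A+B) * ln (2*B/(A+B))" using A B by (simp add: xlnx_def field_simps)
    then show ?thesis by (simp only: l2)
  qed
  have q: "1 - A/(A+B) = B/(A+B)" using A B by (simp add: field_simps)
  have "A/(A+B) * (ln 2 + ln A - ln (A+B)) + B/(A+B) * (ln 2 + ln B - ln (A+B))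
        = A/(A+B) * ln A + B/(A+B) * ln B + (A/(A+B) + B/(A+B)) * (ln 2 - ln (A+B))"
    by (simp add: algebra_simps)
  also have "A/(A+B) + B/(A+B) = 1" using A B by (simp flip: add_divide_distrib)
  finally have s: "A/(A+B) * (ln 2 + ln A - ln (A+B)) + B/(A+B) * (ln 2 + ln B - ln (A+B))
        = A/(A+B) * ln A + B/(A+B) * ln B + (ln 2 - ln (A+B))" by simp
  have "ln ((A+B)/2) = ln (A+B) - ln 2" using A B by (simp add: ln_div)
  then show ?thesis unfolding e1 e2 x1 x2 q using s by linarith
qed

lemma Ient_upd: "Ient (Suc n) (z(n:=m)) = Ient n z + (xlnx (1+m)/2 + xlnx (1-m)/2)"
proof -
  have "(\<Sum>i<n. xlnx (1 + (z(n:=m)) i) / 2 + xlnx (1 - (z(n:=m)) i) / 2)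
      = (\<Sum>i<n. xlnx (1 + z i) / 2 + xlnx (1 - z i) / 2)"
    by (intro sum.cong) auto
  then show ?thesis unfolding Ient_def by simp
qed

lemma cvx_upd:
  assumes "cvx P" "0 \<le> t" "t \<le> 1"
  shows "P (u(n:=(1-t)*a+t*b)) \<le> (1-t) * P (u(n:=a)) + t * P (u(n:=b))"
proof -
  have "(\<lambda>i. (1-t) * (u(n:=a)) i + t * (u(n:=b)) i) = u(n:=(1-t)*a+t*b)"
    by (auto simp: fun_eq_iff algebra_simps)
  then show ?thesis using assms unfolding cvx_def by metis
qed

lemma cvx_fix:
  assumes "cvx P"
  shows "cvx (\<lambda>u. P (u(n:=c)))"
  unfolding cvx_def
proof (intro allI impI)
  fix u v :: "nat \<Rightarrow> real" and t :: real assume t: "0 \<le> t" "t \<le> 1"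
  have "(\<lambda>i. (1-t) * (u(n:=c)) i + t * (v(n:=c)) i) = (\<lambda>i. (1-t) * u i + t * v i)(n:=c)"
    by (auto simp: fun_eq_iff algebra_simps)
  then show "P ((\<lambda>i. (1-t) * u i + t * v i)(n:=c)) \<le> (1-t) * P (u(n:=c)) + t * P (v(n:=c))"
    using assms t unfolding cvx_def by metis
qed

lemma key:
  assumes "cvx P" "\<forall>x\<in>signs n. \<forall>z\<in>cube n. F x \<le> M + Ient n z + P (\<lambda>i. x i - z i)"
  shows "ln (Em n (\<lambda>x. exp (F x))) \<le> M + Wexp n P"
  using assms
proof (induction n arbitrary: F P M)
  case 0
  have z: "(\<lambda>_. 0) \<in> cube 0" "(\<lambda>_. 0) \<in> signs 0" by (auto simp: cube_def signs_def Rn_def)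
  from 0(2) z have "F (\<lambda>_. 0) \<le> M + Ient 0 (\<lambda>_. 0) + P (\<lambda>i. 0 - 0)" by blast
  then show ?case by (simp add: Em_def Wexp_def signs_0 Ient_def)
next
  case (Suc n)
  define A where "A s = Em n (\<lambda>x. exp (F (x(n:=s))))" for s
  have Apos: "A s > 0" for s unfolding A_def by (rule Em_pos) simp
  define p where "p = A 1 / (A 1 + A (-1))"
  define m where "m = 2*p - 1"
  define hm where "hm = xlnx (1+m)/2 + xlnx (1-m)/2"
  have p01: "0 < p" "p < 1" using Apos[of 1] Apos[of "-1"] by (auto simp: p_def field_simps)
  have m: "-1 \<le> m" "m \<le> 1" using p01 by (auto simp: m_def)
  define \<psi> where "\<psi> t = Wexp n (\<lambda>u. P (u(n:=t)))" for t
  have IH: "ln (A s) \<le> (M + hm) + \<psi> (s - m)" if s: "s = 1 \<or> s = -1" for s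
  proof -
    have "ln (Em n (\<lambda>x. exp (F (x(n:=s))))) \<le> (M + hm) + Wexp n (\<lambda>u. P (u(n:=s-m)))"
    proof (rule Suc.IH)
      show "cvx (\<lambda>u. P (u(n:=s-m)))" using Suc.prems(1) by (rule cvx_fix)
      show "\<forall>x\<in>signs n. \<forall>z\<in>cube n. F (x(n:=s)) \<le> M + hm + Ient n z + P ((\<lambda>i. x i - z i)(n:=s-m))"
      proof (intro ballI)
        fix x z assume x: "x \<in> signs n" and z: "z \<in> cube n"
        have x': "x(n:=s) \<in> signs (Suc n)" using x s by (auto simp: signs_def Rn_def less_Suc_eq)
        have z': "z(n:=m) \<in> cube (Suc n)" using z m by (auto simp: cube_def Rn_def less_Suc_eq)
        have "F (x(n:=s)) \<le> M + Ient (Suc n) (z(n:=m)) + P (\<lambda>i. (x(n:=s)) i - (z(n:=m)) i)"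
          using Suc.prems(2) x' z' by blast
        moreover have "(\<lambda>i. (x(n:=s)) i - (z(n:=m)) i) = (\<lambda>i. x i - z i)(n:=s-m)"
          by (auto simp: fun_eq_iff)
        ultimately show "F (x(n:=s)) \<le> M + hm + Ient n z + P ((\<lambda>i. x i - z i)(n:=s-m))"
          by (simp add: Ient_upd hm_def)
      qed
    qed
    then show ?thesis by (simp add: A_def \<psi>_def)
  qed
  have cv: "\<psi> ((1-t)*a + t*b) \<le> (1-t) * \<psi> a + t * \<psi> b" if "0 \<le> t" "t \<le> 1" for a b t
  proof -
    have "\<psi> ((1-t)*a + t*b) \<le> Wexp n (\<lambda>u. (1-t) * P (u(n:=a)) + t * P (u(n:=b)))"
      unfolding \<psi>_def by (rule Wexp_mono) (rule cvx_upd[OF Suc.prems(1) that])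
    then show ?thesis by (simp add: Wexp_lin \<psi>_def)
  qed
  have E: "Em (Suc n) (\<lambda>x. exp (F x)) = (A 1 + A (-1))/2" by (simp add: Em_Suc A_def)
  have "ln ((A 1 + A (-1))/2) = p * ln (A 1) + (1-p) * ln (A (-1)) - hm"
    unfolding hm_def m_def p_def by (rule gibbs_id[OF Apos Apos])
  also have "\<dots> \<le> p * ((M + hm) + \<psi> (1 - m)) + (1-p) * ((M + hm) + \<psi> (-1 - m)) - hm"
    using IH[of 1] IH[of "-1"] p01
    by (intro diff_right_mono add_mono mult_left_mono) auto
  also have "\<dots> = M + (p * \<psi> (1-m) + (1-p) * \<psi> (-1-m))"
    by (simp add: algebra_simps)
  also have "\<dots> = M + ((1+m)/2 * \<psi> (1-m) + (1-m)/2 * \<psi> (-1-m))"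
  proof -
    have pm2: "1 - p = (1-m)/2" by (simp add: m_def field_simps)
    have pm: "p = (1+m)/2" by (simp add: m_def)
    show ?thesis by (simp only: pm2) (simp only: pm)
  qed
  also have "\<dots> \<le> M + (\<psi> 2 + 2 * \<psi> 0 + \<psi> (-2)) / 4"
    using oneD[of \<psi> m] cv m by simp
  also have "\<dots> = M + Wexp (Suc n) P" by (simp add: Wexp_Suc \<psi>_def)
  finally show ?case by (simp add: E)
qed

lemma enorm_L2: "enorm n u = L2_set u {..<n}"
  by (simp add: enorm_def L2_set_def)

lemma abs_le_enorm: "i < n \<Longrightarrow> \<bar>u i\<bar> \<le> enorm n u"
proof -
  assume i: "i < n"
  have "(u i)\<^sup>2 \<le> (\<Sum>j<n. (u j)\<^sup>2)" using i by (intro member_le_sum) auto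
  then have "sqrt ((u i)\<^sup>2) \<le> enorm n u" unfolding enorm_def by (rule real_sqrt_le_mono)
  then show ?thesis by simp
qed

lemma enorm_le_sum: "enorm n u \<le> (\<Sum>j<n. \<bar>u j\<bar>)"
  unfolding enorm_L2 by (rule L2_set_le_sum_abs)

lemma cube_PiE: "cube n = PiE UNIV (\<lambda>i. if i < n then {-1..1} else {0})"
proof (rule set_eqI)
  fix x :: "nat \<Rightarrow> real"
  have "x \<in> cube n \<longleftrightarrow> (\<forall>i. x i \<in> (if i < n then {-1..1} else {0}))"
  proof
    assume "x \<in> cube n"
    then have a: "\<forall>i\<ge>n. x i = 0" "\<forall>i<n. \<bar>x i\<bar> \<le> 1" by (auto simp: cube_def Rn_def)
    show "\<forall>i. x i \<in> (if i < n then {-1..1} else {0})"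
    proof
      fix i show "x i \<in> (if i < n then {-1..1} else {0})"
        using a[rule_format, of i] by (cases "i < n") (auto simp: abs_le_iff)
    qed
  next
    assume a: "\<forall>i. x i \<in> (if i < n then {-1..1} else {0})"
    have "x i = 0" if "i \<ge> n" for i using a[rule_format, of i] that by auto
    moreover have "\<bar>x i\<bar> \<le> 1" if "i < n" for i using a[rule_format, of i] that by auto
    ultimately show "x \<in> cube n" by (auto simp: cube_def Rn_def)
  qed
  then show "x \<in> cube n \<longleftrightarrow> x \<in> PiE UNIV (\<lambda>i. if i < n then {-1..1} else {0})"
    by (simp add: PiE_UNIV_domain Pi_iff)
qed

lemma compact_cube: "compact (cube n)"
proof -
  have "compactin (product_topology (\<lambda>i. euclidean) UNIV) (PiE UNIV (\<lambda>i. if i < n then {-1..1::real} else {0}))"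
    by (subst compactin_PiE) auto
  then show ?thesis unfolding cube_PiE euclidean_product_topology by simp
qed

lemma cont_coord:
  assumes C: "C1_grad n f g" and i: "i < n"
  shows "continuous_on (cube n) (\<lambda>y. g y i)"
  unfolding continuous_on_topological
proof (intro ballI allI impI)
  fix x B assume x: "x \<in> cube n" and B: "open B" "g x i \<in> B"
  obtain e where e: "e > 0" "ball (g x i) e \<subseteq> B" using B openE by blast
  have xR: "x \<in> Rn n" using x by (auto simp: cube_def)
  obtain d where d: "d > 0" "\<forall>y\<in>Rn n. enorm n (\<lambda>i. y i - x i) < d \<longrightarrow> enorm n (\<lambda>i. g y i - g x i) < e"
    using C xR e(1) unfolding C1_grad_def by blast
  define \<delta> where "\<delta> = d / (real n + 1)"
  have \<delta>: "\<delta> > 0" using d by (simp add: \<delta>_def)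
  define A where "A = (\<Inter>j\<in>{..<n}. (\<lambda>y. y j) -` ball (x j) \<delta>)"
  have "open A" unfolding A_def
  proof (intro open_INT ballI)
    fix j :: nat
    have "continuous_on UNIV (\<lambda>y::nat\<Rightarrow>real. y j)" by simp
    then show "open ((\<lambda>y::nat\<Rightarrow>real. y j) -` ball (x j) \<delta>)"
      using continuous_on_open_vimage[of UNIV "\<lambda>y::nat\<Rightarrow>real. y j"] by auto
  qed simp
  moreover have "x \<in> A" using \<delta> by (auto simp: A_def)
  moreover have "g y i \<in> B" if y: "y \<in> cube n" "y \<in> A" for y
  proof -
    have yR: "y \<in> Rn n" using y by (auto simp: cube_def)
    have "(\<Sum>j<n. \<bar>y j - x j\<bar>) \<le> (\<Sum>j<n. \<delta>)"
      using y(2) by (intro sum_mono) (auto simp: A_def dist_real_def abs_minus_commute less_imp_le)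
    also have "\<dots> = real n * \<delta>" by simp
    also have "\<dots> < d" using d(1) by (simp add: \<delta>_def field_simps)
    finally have "enorm n (\<lambda>j. y j - x j) < d" using enorm_le_sum[of n "\<lambda>j. y j - x j"] by simp
    then have "enorm n (\<lambda>j. g y j - g x j) < e" using d(2) yR by blast
    then have "\<bar>g y i - g x i\<bar> < e" using abs_le_enorm[OF i, of "\<lambda>j. g y j - g x j"] by simp
    then show ?thesis using e(2) by (auto simp: dist_real_def abs_minus_commute)
  qed
  ultimately show "\<exists>A. open A \<and> x \<in> A \<and> (\<forall>y\<in>cube n. y \<in> A \<longrightarrow> g y i \<in> B)" by blast
qed

lemma grad_bound:
  assumes C: "C1_grad n f g"
  shows "\<exists>B. \<forall>y\<in>cube n. (\<Sum>i<n. \<bar>g y i\<bar>) \<le> B"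
proof -
  have "continuous_on (cube n) (\<lambda>y. \<Sum>i<n. \<bar>g y i\<bar>)"
    using cont_coord[OF C] by (intro continuous_intros) auto
  then have "compact ((\<lambda>y. \<Sum>i<n. \<bar>g y i\<bar>) ` cube n)"
    using compact_cube by (rule compact_continuous_image)
  then have "bounded ((\<lambda>y. \<Sum>i<n. \<bar>g y i\<bar>) ` cube n)" by (rule compact_imp_bounded)
  then obtain B where "\<forall>v\<in>(\<lambda>y. \<Sum>i<n. \<bar>g y i\<bar>) ` cube n. norm v \<le> B"
    unfolding bounded_iff by blast
  then show ?thesis by auto
qed

lemma enorm_scale: "enorm n (\<lambda>i. h * u i) = \<bar>h\<bar> * enorm n u"
proof -
  have "(\<Sum>i<n. (h * u i)\<^sup>2) = h\<^sup>2 * (\<Sum>i<n. (u i)\<^sup>2)"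
    by (simp add: sum_distrib_left power_mult_distrib)
  then show ?thesis unfolding enorm_def by (simp add: real_sqrt_mult)
qed

lemma ip_scale: "ip n \<xi> (\<lambda>i. h * u i) = h * ip n \<xi> u"
  unfolding ip_def by (simp add: sum_distrib_left algebra_simps)

lemma deriv_line:
  assumes C: "C1_grad n f g" and z: "z \<in> Rn n" and u: "u \<in> Rn n"
  shows "DERIV (\<lambda>t. f (\<lambda>i. z i + t * u i)) t :> ip n (g (\<lambda>i. z i + t * u i)) u"
proof -
  define w where "w = (\<lambda>i. z i + t * u i)"
  define D where "D = ip n (g w) u"
  define N where "N = enorm n u"
  have N0: "N \<ge> 0" by (simp add: N_def enorm_def sum_nonneg)
  have wR: "w \<in> Rn n" using z u by (auto simp: w_def Rn_def)
  have hg: "has_grad n f (g w) w" using C wR unfolding C1_grad_def by blast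
  have "(\<lambda>h. (f (\<lambda>i. z i + (t + h) * u i) - f (\<lambda>i. z i + t * u i)) / h) \<midarrow>0\<rightarrow> D"
    unfolding LIM_eq
  proof (intro allI impI)
    fix r :: real assume r: "r > 0"
    define e where "e = r / (N + 1)"
    have e: "e > 0" using r N0 by (simp add: e_def)
    obtain d where d: "d > 0" "\<forall>h\<in>Rn n. enorm n h < d \<longrightarrow> \<bar>f (\<lambda>i. w i + h i) - f w - ip n (g w) h\<bar> \<le> e * enorm n h"
      using hg e unfolding has_grad_def by blast
    show "\<exists>s>0. \<forall>h. h \<noteq> 0 \<and> norm (h - 0) < s \<longrightarrow> norm ((f (\<lambda>i. z i + (t + h) * u i) - f (\<lambda>i. z i + t * u i)) / h - D) < r"
    proof (intro exI[of _ "d / (N+1)"] conjI allI impI)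
      show "d / (N+1) > 0" using d N0 by simp
      fix h :: real assume h: "h \<noteq> 0 \<and> norm (h - 0) < d / (N+1)"
      have hu: "(\<lambda>i. h * u i) \<in> Rn n" using u by (auto simp: Rn_def)
      have "\<bar>h\<bar> * N \<le> \<bar>h\<bar> * (N + 1)" by (simp add: mult_left_mono)
      also have "\<dots> < d" using h N0 by (simp add: field_simps)
      finally have "enorm n (\<lambda>i. h * u i) < d" by (simp add: enorm_scale N_def)
      then have b: "\<bar>f (\<lambda>i. w i + h * u i) - f w - h * D\<bar> \<le> e * (\<bar>h\<bar> * N)"
        using d(2)[rule_format, OF hu] by (simp add: enorm_scale ip_scale D_def N_def)
      have eq: "(\<lambda>i. w i + h * u i) = (\<lambda>i. z i + (t + h) * u i)" by (auto simp: w_def algebra_simps)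
      have "\<bar>(f (\<lambda>i. z i + (t + h) * u i) - f w) / h - D\<bar> = \<bar>f (\<lambda>i. w i + h * u i) - f w - h * D\<bar> / \<bar>h\<bar>"
        using h by (simp add: eq field_simps flip: abs_divide)
      also have "\<dots> \<le> e * (\<bar>h\<bar> * N) / \<bar>h\<bar>" using b h by (intro divide_right_mono) auto
      also have "\<dots> = e * N" using h by simp
      also have "\<dots> < r" using r N0 by (simp add: e_def field_simps)
      finally show "norm ((f (\<lambda>i. z i + (t + h) * u i) - f (\<lambda>i. z i + t * u i)) / h - D) < r"
        by (simp add: w_def)
    qed
  qed
  then show ?thesis unfolding DERIV_def D_def w_def by (simp add: algebra_simps)
qed

lemma mvt:
  assumes C: "C1_grad n f g" and x: "x \<in> cube n" and z: "z \<in> cube n"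
  shows "\<exists>w\<in>cube n. f x - f z = ip n (g w) (\<lambda>i. x i - z i)"
proof -
  define u where "u = (\<lambda>i. x i - z i)"
  have zR: "z \<in> Rn n" and uR: "u \<in> Rn n" using x z by (auto simp: cube_def Rn_def u_def)
  obtain s where s: "0 < s" "s < 1"
    "f (\<lambda>i. z i + 1 * u i) - f (\<lambda>i. z i + 0 * u i) = (1 - 0) * ip n (g (\<lambda>i. z i + s * u i)) u"
    using MVT2[of 0 1 "\<lambda>t. f (\<lambda>i. z i + t * u i)" "\<lambda>t. ip n (g (\<lambda>i. z i + t * u i)) u"]
      deriv_line[OF C zR uR] by auto
  have e1: "(\<lambda>i. z i + 1 * u i) = x" and e0: "(\<lambda>i. z i + 0 * u i) = z" by (auto simp: u_def)
  have wc: "(\<lambda>i. z i + s * u i) \<in> cube n"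
  proof -
    have "\<bar>z i + s * u i\<bar> \<le> 1" if "i < n" for i
    proof -
      have "z i + s * u i = (1 - s) * z i + s * x i" by (simp add: u_def algebra_simps)
      also have "\<bar>\<dots>\<bar> \<le> (1 - s) * \<bar>z i\<bar> + s * \<bar>x i\<bar>" using s by (auto intro: order_trans[OF abs_triangle_ineq] simp: abs_mult)
      also have "\<dots> \<le> (1 - s) * 1 + s * 1" using x z that s
        by (intro add_mono mult_left_mono) (auto simp: cube_def)
      finally show ?thesis by simp
    qed
    then show ?thesis using zR uR by (auto simp: cube_def Rn_def)
  qed
  show ?thesis using s(3) wc unfolding e1 e0 u_def by auto
qed

lemma xlnx_ge: "t \<ge> 0 \<Longrightarrow> xlnx t \<ge> t - 1"
proof (cases "t = 0")
  case False
  assume t: "t \<ge> 0"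
  then have tp: "t > 0" using False by simp
  have "ln (1/t) \<le> 1/t - 1" using tp by (intro ln_le_minus_one) simp
  then have "- ln t \<le> 1/t - 1" using tp by (simp add: ln_div)
  then have "t * (- ln t) \<le> t * (1/t - 1)" using tp by (intro mult_left_mono) auto
  then show ?thesis using tp False by (simp add: xlnx_def algebra_simps)
qed (simp add: xlnx_def)

lemma Ient_nonneg: "y \<in> cube n \<Longrightarrow> Ient n y \<ge> 0"
  unfolding Ient_def
proof (intro sum_nonneg)
  fix i assume y: "y \<in> cube n" and i: "i \<in> {..<n}"
  then have "\<bar>y i\<bar> \<le> 1" by (auto simp: cube_def)
  then have "xlnx (1 + y i) \<ge> (1 + y i) - 1" "xlnx (1 - y i) \<ge> (1 - y i) - 1"
    using xlnx_ge[of "1 + y i"] xlnx_ge[of "1 - y i"] by auto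
  then show "0 \<le> xlnx (1 + y i) / 2 + xlnx (1 - y i) / 2" by simp
qed

lemma Em_expect: "measure_pmf.expectation (mu n) G = Em n G"
  unfolding mu_def Em_def
  by (simp add: integral_pmf_of_set finite_signs signs_ne card_signs)

lemma zero_cube: "(\<lambda>_. 0) \<in> cube n" by (auto simp: cube_def Rn_def)

theorem theorem2p6:
  shows "\<exists>\<kappa>>0. \<forall>n. \<forall>(f :: (nat \<Rightarrow> real) \<Rightarrow> real) g.
     C1_grad n f g \<longrightarrow>
     ln (measure_pmf.expectation (mu n) (\<lambda>x. exp (f x)))
       \<le> (SUP y\<in>cube n. f y - Ient n y) + \<kappa> * bV n (g ` cube n)"
proof (intro exI[of _ 2] conjI allI impI)
  fix n and f :: "(nat \<Rightarrow> real) \<Rightarrow> real" and g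
  assume C: "C1_grad n f g"
  obtain B where B: "\<forall>y\<in>cube n. (\<Sum>i<n. \<bar>g y i\<bar>) \<le> B" using grad_bound[OF C] by blast
  have B0: "B \<ge> 0" using B zero_cube[of n] by (meson order_trans sum_nonneg abs_ge_zero)
  define V where "V = g ` cube n"
  define S where "S u = Sup ((\<lambda>\<xi>. ip n \<xi> u) ` V)" for u
  have Vne: "V \<noteq> {}" using zero_cube[of n] by (auto simp: V_def)
  have ipb: "ip n \<xi> u \<le> B * (\<Sum>i<n. \<bar>u i\<bar>)" if "\<xi> \<in> V" for \<xi> u
  proof -
    define K where "K = (\<Sum>i<n. \<bar>u i\<bar>)"
    have K0: "K \<ge> 0" by (simp add: K_def sum_nonneg)
    have "ip n \<xi> u \<le> (\<Sum>i<n. \<bar>\<xi> i\<bar> * \<bar>u i\<bar>)"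
      unfolding ip_def by (intro sum_mono) (metis abs_ge_self abs_mult)
    also have "\<dots> \<le> (\<Sum>i<n. \<bar>\<xi> i\<bar> * K)"
      by (intro sum_mono mult_left_mono) (auto simp: K_def intro!: member_le_sum)
    also have "\<dots> = (\<Sum>i<n. \<bar>\<xi> i\<bar>) * K" by (simp add: sum_distrib_right)
    also have "\<dots> \<le> B * K" using B that K0 by (intro mult_right_mono) (auto simp: V_def)
    finally show ?thesis by (simp add: K_def)
  qed
  have bdd: "bdd_above ((\<lambda>\<xi>. ip n \<xi> u) ` V)" for u
    using ipb by (intro bdd_aboveI[of _ "B * (\<Sum>i<n. \<bar>u i\<bar>)"]) auto
  have S_ge: "ip n \<xi> u \<le> S u" if "\<xi> \<in> V" for \<xi> u
    unfolding S_def using bdd that by (intro cSup_upper) auto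
  have S_le: "S u \<le> c" if "\<And>\<xi>. \<xi> \<in> V \<Longrightarrow> ip n \<xi> u \<le> c" for u c
    unfolding S_def using Vne that by (intro cSup_least) auto
  have ip_add: "ip n \<xi> (\<lambda>i. a * u i + b * v i) = a * ip n \<xi> u + b * ip n \<xi> v" for \<xi> a b u v
    unfolding ip_def by (simp add: sum.distrib sum_distrib_left algebra_simps)
  have cvxS: "cvx S" unfolding cvx_def
  proof (intro allI impI)
    fix u v :: "nat \<Rightarrow> real" and t :: real assume t: "0 \<le> t" "t \<le> 1"
    show "S (\<lambda>i. (1-t) * u i + t * v i) \<le> (1-t) * S u + t * S v"
    proof (rule S_le)
      fix \<xi> assume "\<xi> \<in> V"
      then have "(1-t) * ip n \<xi> u + t * ip n \<xi> v \<le> (1-t) * S u + t * S v"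
        using t S_ge by (intro add_mono mult_left_mono) auto
      then show "ip n \<xi> (\<lambda>i. (1-t) * u i + t * v i) \<le> (1-t) * S u + t * S v" by (simp add: ip_add)
    qed
  qed
  have Ssub: "S (\<lambda>i. u i + v i) \<le> S u + S v" for u v
  proof (rule S_le)
    fix \<xi> assume "\<xi> \<in> V"
    then have "ip n \<xi> u + ip n \<xi> v \<le> S u + S v" using S_ge by (intro add_mono) auto
    then show "ip n \<xi> (\<lambda>i. u i + v i) \<le> S u + S v" using ip_add[of \<xi> 1 u 1 v] by simp
  qed
  have fx: "f x \<le> f z + S (\<lambda>i. x i - z i)" if xz: "x \<in> cube n" "z \<in> cube n" for x z
  proof -
    obtain w where w: "w \<in> cube n" "f x - f z = ip n (g w) (\<lambda>i. x i - z i)" using mvt[OF C xz] by blast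
    have "g w \<in> V" using w(1) by (simp add: V_def)
    then have "ip n (g w) (\<lambda>i. x i - z i) \<le> S (\<lambda>i. x i - z i)" by (rule S_ge)
    then show ?thesis using w(2) by simp
  qed
  have fbdd: "bdd_above ((\<lambda>y. f y - Ient n y) ` cube n)"
  proof (rule bdd_aboveI[of _ "f (\<lambda>_. 0) + B * real n"])
    fix r assume "r \<in> (\<lambda>y. f y - Ient n y) ` cube n"
    then obtain y where y: "y \<in> cube n" "r = f y - Ient n y" by blast
    have "S (\<lambda>i. y i - 0) \<le> B * real n"
    proof (rule S_le)
      fix \<xi> assume "\<xi> \<in> V"
      then have "ip n \<xi> (\<lambda>i. y i - 0) \<le> B * (\<Sum>i<n. \<bar>y i - 0\<bar>)" by (rule ipb)
      also have "\<dots> \<le> B * (\<Sum>i<n. 1)" using y B0 by (intro mult_left_mono sum_mono) (auto simp: cube_def)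
      finally show "ip n \<xi> (\<lambda>i. y i - 0) \<le> B * real n" by simp
    qed
    then show "r \<le> f (\<lambda>_. 0) + B * real n"
      using fx[OF y(1) zero_cube[of n]] Ient_nonneg[OF y(1)] y(2) by simp
  qed
  define M where "M = (SUP y\<in>cube n. f y - Ient n y)"
  have hyp: "\<forall>x\<in>signs n. \<forall>z\<in>cube n. f x \<le> M + Ient n z + S (\<lambda>i. x i - z i)"
  proof (intro ballI)
    fix x z assume x: "x \<in> signs n" and z: "z \<in> cube n"
    have xc: "x \<in> cube n" using x by (auto simp: signs_def cube_def)
    have "f z - Ient n z \<le> M" unfolding M_def using fbdd z by (intro cSup_upper) auto
    then show "f x \<le> M + Ient n z + S (\<lambda>i. x i - z i)" using fx[OF xc z] by simp
  qed
  have k: "ln (Em n (\<lambda>x. exp (f x))) \<le> M + Wexp n S" by (rule key[OF cvxS hyp])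
  have "Wexp n S \<le> (\<Sum>e\<in>signs n. \<Sum>e'\<in>signs n. S e + S e') / 4^n"
    unfolding Wexp_def by (intro divide_right_mono sum_mono Ssub) auto
  also have "(\<Sum>e\<in>signs n. \<Sum>e'\<in>signs n. S e + S e') = 2^n * (\<Sum>e\<in>signs n. S e) + 2^n * (\<Sum>e\<in>signs n. S e)"
    by (simp add: sum.distrib card_signs sum_distrib_left[symmetric])
  also have "(2^n * (\<Sum>e\<in>signs n. S e) + 2^n * (\<Sum>e\<in>signs n. S e)) / 4^n = 2 * Em n S"
    by (simp add: Em_def field_simps power_mult_distrib flip: power_mult_distrib)
  finally have w: "Wexp n S \<le> 2 * Em n S" .
  have bv: "bV n (g ` cube n) = Em n S"
  proof -
    have "S = (\<lambda>e. Sup ((\<lambda>\<xi>. ip n \<xi> e) ` g ` cube n))" by (simp add: fun_eq_iff S_def V_def)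
    then show ?thesis unfolding bV_def Em_expect by simp
  qed
  show "ln (measure_pmf.expectation (mu n) (\<lambda>x. exp (f x)))
       \<le> (SUP y\<in>cube n. f y - Ient n y) + 2 * bV n (g ` cube n)"
    using k w unfolding Em_expect bv M_def by simp
qed simp

end
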